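(* Let $S$ be a proper restriction semigroup, and let $\cdot$ and $\circ$ be its underlying left and right partial actions of $S/\sigma$ on $P(S)$. Then: (1) $S$ satisfies condition $\mathrm{(EP)^r}$: for all $s,t,u\in S$, if $s\,\sigma\, tu$ then there exists $v\in S$ with $t^+s=tv$ and $u\,\sigma\, v$ — if and only if $\circ$ is strong; (2) $S$ satisfies condition $\mathrm{(EP)^l}$: for all $s,t,u\in S$, if $s\,\sigma\, ut$ then there exists $v\in S$ with $st^*=vt$ and $u\,\sigma\, v$ — if and only if $\cdot$ is strong.
   Context: A restriction semigroup is an algebra $(S,\cdot,{}^*,{}^+)$ where $(S,\cdot)$ is a semigroup and the identities $xx^*=x$, $x^*y^*=y^*x^*$, $(xy^* )^*=x^*y^*$, $x^*y=y(xy)^*$, $x^+x=x$, $x^+y^+=y^+x^+$, $(x^+y)^+=x^+y^+$, $xy^+=(xy)^+x$, $(x^+)^*=x^+$, $(x^* )^+=x^*$ hold. $P(S)=\{x^*\colon x\in S\}$ is the semilattice of projections; $\sigma$ is the least congruence identifying all projections; $S$ is proper if ($a^*=b^*$, $a\,\sigma\,b$) $\Rightarrow a=b$ and ($a^+=b^+$, $a\,\sigma\,b$) $\Rightarrow a=b$. Underlying partial actions: for $t\in S/\sigma$ and $e\in P(S)$, $t\cdot e$ is defined iff there is $a\in t$ with $a^*\ge e$, and then $t\cdot e=(ae)^+$; $e\circ t$ is defined iff there is $a\in t$ with $a^+\ge e$... equivalently $e\circ t$ is defined iff $e=t\cdot f$ for some $f$, and then $e\circ t=f$. A left partial action $\cdot$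 of a monoid $T$ is strong if for all $s,t\in T$ and $y$: whenever $t\cdot y$ and $(st)\cdot y$ are defined, $s\cdot(t\cdot y)$ is defined. A right partial action $\circ$ is strong if whenever $y\circ s$ and $y\circ(st)$ are defined, $(y\circ s)\circ t$ is defined. *)

theory Defs
  imports Main
begin

text \<open>A restriction semigroup on the whole of the type 'a, with multiplication m,
  star operation st (x^*) and plus operation pl (x^+).\<close>

definition restriction_semigroup ::
  "('a \<Rightarrow> 'a \<Rightarrow> 'a) \<Rightarrow> ('a \<Rightarrow> 'a) \<Rightarrow> ('a \<Rightarrow> 'a) \<Rightarrow> bool" where
  "restriction_semigroup m st pl \<longleftrightarrow>
     (\<forall>x y z. m (m x y) z = m x (m y z)) \<and>
     (\<forall>x. m x (st x) = x) \<and>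
     (\<forall>x y. m (st x) (st y) = m (st y) (st x)) \<and>
     (\<forall>x y. st (m x (st y)) = m (st x) (st y)) \<and>
     (\<forall>x y. m (st x) y = m y (st (m x y))) \<and>
     (\<forall>x. m (pl x) x = x) \<and>
     (\<forall>x y. m (pl x) (pl y) = m (pl y) (pl x)) \<and>
     (\<forall>x y. pl (m (pl x) y) = m (pl x) (pl y)) \<and>
     (\<forall>x y. m x (pl y) = m (pl (m x y)) x) \<and>
     (\<forall>x. st (pl x) = pl x) \<and>
     (\<forall>x. pl (st x) = st x)"

definition projections :: "('a \<Rightarrow> 'a) \<Rightarrow> 'a set" where
  "projections st = range st"

definition proj_le :: "('a \<Rightarrow> 'a \<Rightarrow> 'a) \<Rightarrow> 'a \<Rightarrow> 'a \<Rightarrow> bool" where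
  "proj_le m e f \<longleftrightarrow> e = m e f"

definition rs_congruence ::
  "('a \<Rightarrow> 'a \<Rightarrow> 'a) \<Rightarrow> ('a \<Rightarrow> 'a) \<Rightarrow> ('a \<Rightarrow> 'a) \<Rightarrow> ('a \<Rightarrow> 'a \<Rightarrow> bool) \<Rightarrow> bool" where
  "rs_congruence m st pl R \<longleftrightarrow> equivp R \<and>
     (\<forall>a b c. R a b \<longrightarrow> R (m a c) (m b c) \<and> R (m c a) (m c b)) \<and>
     (\<forall>a b. R a b \<longrightarrow> R (st a) (st b) \<and> R (pl a) (pl b))"

definition sigma ::
  "('a \<Rightarrow> 'a \<Rightarrow> 'a) \<Rightarrow> ('a \<Rightarrow> 'a) \<Rightarrow> ('a \<Rightarrow> 'a) \<Rightarrow> 'a \<Rightarrow> 'a \<Rightarrow> bool" where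
  "sigma m st pl a b \<longleftrightarrow>
     (\<forall>R. rs_congruence m st pl R \<and>
          (\<forall>e\<in>projections st. \<forall>f\<in>projections st. R e f) \<longrightarrow> R a b)"

definition sclass ::
  "('a \<Rightarrow> 'a \<Rightarrow> 'a) \<Rightarrow> ('a \<Rightarrow> 'a) \<Rightarrow> ('a \<Rightarrow> 'a) \<Rightarrow> 'a \<Rightarrow> 'a set" where
  "sclass m st pl a = {b. sigma m st pl a b}"

definition proper ::
  "('a \<Rightarrow> 'a \<Rightarrow> 'a) \<Rightarrow> ('a \<Rightarrow> 'a) \<Rightarrow> ('a \<Rightarrow> 'a) \<Rightarrow> bool" where
  "proper m st pl \<longleftrightarrow>
     (\<forall>a b. st a = st b \<and> sigma m st pl a b \<longrightarrow> a = b) \<and>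
     (\<forall>a b. pl a = pl b \<and> sigma m st pl a b \<longrightarrow> a = b)"

definition ldef :: "('a \<Rightarrow> 'a \<Rightarrow> 'a) \<Rightarrow> ('a \<Rightarrow> 'a) \<Rightarrow> 'a set \<Rightarrow> 'a \<Rightarrow> bool" where
  "ldef m st t e \<longleftrightarrow> (\<exists>a\<in>t. proj_le m e (st a))"

definition lact ::
  "('a \<Rightarrow> 'a \<Rightarrow> 'a) \<Rightarrow> ('a \<Rightarrow> 'a) \<Rightarrow> ('a \<Rightarrow> 'a) \<Rightarrow> 'a set \<Rightarrow> 'a \<Rightarrow> 'a" where
  "lact m st pl t e = pl (m (SOME a. a \<in> t \<and> proj_le m e (st a)) e)"

definition rdef :: "('a \<Rightarrow> 'a \<Rightarrow> 'a) \<Rightarrow> ('a \<Rightarrow> 'a) \<Rightarrow> 'a \<Rightarrow> 'a set \<Rightarrow> bool" where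
  "rdef m pl e t \<longleftrightarrow> (\<exists>a\<in>t. proj_le m e (pl a))"

definition ract ::
  "('a \<Rightarrow> 'a \<Rightarrow> 'a) \<Rightarrow> ('a \<Rightarrow> 'a) \<Rightarrow> ('a \<Rightarrow> 'a) \<Rightarrow> 'a \<Rightarrow> 'a set \<Rightarrow> 'a" where
  "ract m st pl e t = st (m e (SOME a. a \<in> t \<and> proj_le m e (pl a)))"

text \<open>Strongness. Elements of S/sigma are written as classes of representatives;
  the product of the classes of a and b is the class of m a b.\<close>
definition strong_left ::
  "('a \<Rightarrow> 'a \<Rightarrow> 'a) \<Rightarrow> ('a \<Rightarrow> 'a) \<Rightarrow> ('a \<Rightarrow> 'a) \<Rightarrow> bool" where
  "strong_left m st pl \<longleftrightarrow>
     (\<forall>a b. \<forall>y\<in>projections st.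
        ldef m st (sclass m st pl b) y \<and> ldef m st (sclass m st pl (m a b)) y \<longrightarrow>
        ldef m st (sclass m st pl a) (lact m st pl (sclass m st pl b) y))"

definition strong_right ::
  "('a \<Rightarrow> 'a \<Rightarrow> 'a) \<Rightarrow> ('a \<Rightarrow> 'a) \<Rightarrow> ('a \<Rightarrow> 'a) \<Rightarrow> bool" where
  "strong_right m st pl \<longleftrightarrow>
     (\<forall>a b. \<forall>y\<in>projections st.
        rdef m pl y (sclass m st pl a) \<and> rdef m pl y (sclass m st pl (m a b)) \<longrightarrow>
        rdef m pl (ract m st pl y (sclass m st pl a)) (sclass m st pl b))"

definition EP_r :: "('a \<Rightarrow> 'a \<Rightarrow> 'a) \<Rightarrow> ('a \<Rightarrow> 'a) \<Rightarrow> ('a \<Rightarrow> 'a) \<Rightarrow> bool" where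
  "EP_r m st pl \<longleftrightarrow> (\<forall>s t u. sigma m st pl s (m t u) \<longrightarrow>
      (\<exists>v. m (pl t) s = m t v \<and> sigma m st pl u v))"

definition EP_l :: "('a \<Rightarrow> 'a \<Rightarrow> 'a) \<Rightarrow> ('a \<Rightarrow> 'a) \<Rightarrow> ('a \<Rightarrow> 'a) \<Rightarrow> bool" where
  "EP_l m st pl \<longleftrightarrow> (\<forall>s t u. sigma m st pl s (m u t) \<longrightarrow>
      (\<exists>v. m s (st t) = m v t \<and> sigma m st pl u v))"

end

theory Submission imports Defs begin
locale rsg =
  fixes m :: "'a \<Rightarrow> 'a \<Rightarrow> 'a" and st pl :: "'a \<Rightarrow> 'a"
  assumes RS: "restriction_semigroup m st pl"
begin
lemma assoc: "m (m x y) z = m x (m y z)" using RS unfolding restriction_semigroup_def by blast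
lemma a1: "m x (st x) = x" using RS unfolding restriction_semigroup_def by blast
lemma a2: "m (st x) (st y) = m (st y) (st x)" using RS unfolding restriction_semigroup_def by blast
lemma a3: "st (m x (st y)) = m (st x) (st y)" using RS unfolding restriction_semigroup_def by blast
lemma a4: "m (st x) y = m y (st (m x y))" using RS unfolding restriction_semigroup_def by blast
lemma b1: "m (pl x) x = x" using RS unfolding restriction_semigroup_def by blast
lemma b2: "m (pl x) (pl y) = m (pl y) (pl x)" using RS unfolding restriction_semigroup_def by blast
lemma b3: "pl (m (pl x) y) = m (pl x) (pl y)" using RS unfolding restriction_semigroup_def by blast
lemma b4: "m x (pl y) = m (pl (m x y)) x" using RS unfolding restriction_semigroup_def by blast
lemma c1: "st (pl x) = pl x" using RS unfolding restriction_semigroup_def by blast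
lemma c2: "pl (st x) = st x" using RS unfolding restriction_semigroup_def by blast

lemma P_st: "e \<in> range st \<Longrightarrow> st e = e" by (metis c1 c2 image_iff)
lemma P_pl: "e \<in> range st \<Longrightarrow> pl e = e" by (metis c2 image_iff)
lemma pl_P: "pl x \<in> range st" by (metis c1 rangeI)
lemma st_P: "st x \<in> range st" by simp
lemma P_idem: "e \<in> range st \<Longrightarrow> m e e = e" by (metis P_st a1)
lemma P_comm: "e \<in> range st \<Longrightarrow> f \<in> range st \<Longrightarrow> m e f = m f e" by (metis P_st a2)
lemma P_mult: "e \<in> range st \<Longrightarrow> f \<in> range st \<Longrightarrow> m e f \<in> range st" by (metis P_st a3 rangeI)

definition E where "E a b \<longleftrightarrow> (\<exists>e\<in>range st. m e a = m e b)"

lemma E_cong: "rs_congruence m st pl E"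
proof -
  have refl: "E a a" for a unfolding E_def by blast
  have sym: "E a b \<Longrightarrow> E b a" for a b unfolding E_def by metis
  have trans: "E a b \<Longrightarrow> E b c \<Longrightarrow> E a c" for a b c
  proof -
    assume "E a b" "E b c"
    then obtain e f where e: "e \<in> range st" "m e a = m e b" and f: "f \<in> range st" "m f b = m f c"
      unfolding E_def by blast
    have "m (m f e) a = m f (m e b)" by (simp add: assoc e)
    also have "\<dots> = m (m f e) b" by (simp add: assoc)
    also have "\<dots> = m (m e f) b" by (simp add: P_comm e f)
    also have "\<dots> = m (m e f) c" by (simp add: assoc f)
    also have "\<dots> = m (m f e) c" by (simp add: P_comm e f)
    finally have "m (m f e) a = m (m f e) c" .
    then show ?thesis unfolding E_def using P_mult e f by blast
  qed
  have eq: "equivp E" 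
    unfolding equivp_reflp_symp_transp reflp_def symp_def transp_def using refl sym trans by metis
  have compat: "E (m a c) (m b c) \<and> E (m c a) (m c b)" if h: "E a b" for a b c
  proof -
    obtain e where e: "e \<in> range st" "m e a = m e b" using h unfolding E_def by auto
    have "m e (m a c) = m e (m b c)" by (simp add: assoc[symmetric] e(2))
    then have 1: "E (m a c) (m b c)" unfolding E_def using e(1) by blast
    have ce: "m (pl (m c e)) c = m c e" using b4[of c e] P_pl[OF e(1)] by simp
    have "m (pl (m c e)) (m c a) = m c (m e a)" by (simp add: assoc[symmetric] ce)
    also have "\<dots> = m c (m e b)" by (simp add: e(2))
    also have "\<dots> = m (pl (m c e)) (m c b)" by (simp add: assoc[symmetric] ce)
    finally have "m (pl (m c e)) (m c a) = m (pl (m c e)) (m c b)" .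
    then have 2: "E (m c a) (m c b)" unfolding E_def using pl_P by blast
    show ?thesis using 1 2 by blast
  qed
  have stpl: "E (st a) (st b) \<and> E (pl a) (pl b)" if h: "E a b" for a b
  proof -
    obtain e where e: "e \<in> range st" "m e a = m e b" using h unfolding E_def by auto
    have g: "st (m e a) = m (st a) (st (m e a))" for a
      by (metis a1 a3 a4 P_st e(1))
    have "m (st (m e a)) (st a) = m (st (m e a)) (st b)"
      by (metis g a2 e(2))
    then have 1: "E (st a) (st b)" unfolding E_def by blast
    have "pl (m e a) = m e (pl a)" "pl (m e b) = m e (pl b)" by (metis b3 P_pl e(1))+
    then have 2: "E (pl a) (pl b)" unfolding E_def using e by metis
    show ?thesis using 1 2 by blast
  qed
  show ?thesis unfolding rs_congruence_def using eq compat stpl by blast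
qed

lemma sigma_E: "sigma m st pl a b \<longleftrightarrow> E a b"
proof
  assume "sigma m st pl a b"
  moreover have "\<forall>e\<in>projections st. \<forall>f\<in>projections st. E e f"
    unfolding projections_def E_def
  proof (intro ballI)
    fix e f assume e: "e \<in> range st" and f: "f \<in> range st"
    have "m (m e f) e = m e f" using P_comm[OF f e] P_idem[OF e] by (metis assoc)
    moreover have "m (m e f) f = m e f" using P_idem[OF f] by (simp add: assoc)
    ultimately show "\<exists>g\<in>range st. m g e = m g f" using P_mult[OF e f] by metis
  qed
  ultimately show "E a b" unfolding sigma_def using E_cong by blast
next
  assume "E a b"
  then obtain e where e: "e \<in> range st" "m e a = m e b" unfolding E_def by blast
  show "sigma m st pl a b" unfolding sigma_def
  proof (intro allI impI)
    fix R assume R: "rs_congruence m st pl R \<and> (\<forall>e\<in>projections st. \<forall>f\<in>projections st. R e f)"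
    then have eq: "equivp R" and cm: "\<And>a b c. R a b \<Longrightarrow> R (m a c) (m b c)"
      unfolding rs_congruence_def by blast+
    have "R (pl x) e" for x using R pl_P e(1) unfolding projections_def by blast
    then have "R (m (pl x) x) (m e x)" for x using cm by blast
    then have "R x (m e x)" for x by (simp add: b1)
    then have "R a (m e a)" "R b (m e b)" by blast+
    then show "R a b" using e(2) eq by (metis equivp_symp equivp_transp)
  qed
qed

lemma sigma_cong: "rs_congruence m st pl (sigma m st pl)"
proof -
  have "sigma m st pl = E" by (intro ext) (rule sigma_E)
  then show ?thesis using E_cong by simp
qed

lemma sig_refl: "sigma m st pl a a" using sigma_cong unfolding rs_congruence_def by (meson equivp_reflp)
lemma sig_sym: "sigma m st pl a b \<Longrightarrow> sigma m st pl b a" using sigma_cong unfolding rs_congruence_def by (meson equivp_symp)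
lemma sig_trans: "sigma m st pl a b \<Longrightarrow> sigma m st pl b c \<Longrightarrow> sigma m st pl a c" using sigma_cong unfolding rs_congruence_def by (meson equivp_transp)
lemma sig_r: "sigma m st pl a b \<Longrightarrow> sigma m st pl (m a c) (m b c)" using sigma_cong unfolding rs_congruence_def by blast
lemma sig_l: "sigma m st pl a b \<Longrightarrow> sigma m st pl (m c a) (m c b)" using sigma_cong unfolding rs_congruence_def by blast
lemma sig_P: "e \<in> range st \<Longrightarrow> f \<in> range st \<Longrightarrow> sigma m st pl e f" unfolding sigma_def projections_def by blast
lemma sig_lP: "e \<in> range st \<Longrightarrow> sigma m st pl (m e a) a"
  by (metis b1 pl_P sig_P sig_r)
lemma sig_rP: "e \<in> range st \<Longrightarrow> sigma m st pl (m a e) a"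
  by (metis a1 st_P sig_P sig_l)
end

locale prs = rsg +
  assumes PR: "proper m st pl"
begin
lemma pr1: "st a = st b \<Longrightarrow> sigma m st pl a b \<Longrightarrow> a = b" using PR unfolding proper_def by blast
lemma pr2: "pl a = pl b \<Longrightarrow> sigma m st pl a b \<Longrightarrow> a = b" using PR unfolding proper_def by blast

lemma pl_yc: "y \<in> range st \<Longrightarrow> y = m y (pl c) \<Longrightarrow> pl (m y c) = y"
  by (metis P_pl b3)
lemma st_cy: "y \<in> range st \<Longrightarrow> y = m y (st c) \<Longrightarrow> st (m c y) = y"
  by (metis P_st a3 P_comm st_P)

lemma ract_wd: "y \<in> range st \<Longrightarrow> sigma m st pl c c' \<Longrightarrow> y = m y (pl c) \<Longrightarrow> y = m y (pl c') \<Longrightarrow> m y c = m y c'"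
  by (metis pl_yc pr2 sig_l)
lemma lact_wd: "y \<in> range st \<Longrightarrow> sigma m st pl c c' \<Longrightarrow> y = m y (st c) \<Longrightarrow> y = m y (st c') \<Longrightarrow> m c y = m c' y"
  by (metis st_cy pr1 sig_r)

lemma ract_eq: assumes "y \<in> range st" "rdef m pl y (sclass m st pl a)"
  shows "\<exists>c. sigma m st pl a c \<and> y = m y (pl c) \<and> ract m st pl y (sclass m st pl a) = st (m y c)"
proof -
  let ?P = "\<lambda>c. c \<in> sclass m st pl a \<and> proj_le m y (pl c)"
  have "\<exists>c. ?P c" using assms(2) unfolding rdef_def by blast
  then have "?P (SOME c. ?P c)" by (rule someI_ex)
  then show ?thesis unfolding ract_def sclass_def proj_le_def by auto
qed
lemma lact_eq: assumes "y \<in> range st" "ldef m st (sclass m st pl a) y"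
  shows "\<exists>c. sigma m st pl a c \<and> y = m y (st c) \<and> lact m st pl (sclass m st pl a) y = pl (m c y)"
proof -
  let ?P = "\<lambda>c. c \<in> sclass m st pl a \<and> proj_le m y (st c)"
  have "\<exists>c. ?P c" using assms(2) unfolding ldef_def by blast
  then have "?P (SOME c. ?P c)" by (rule someI_ex)
  then show ?thesis unfolding lact_def sclass_def proj_le_def by auto
qed

lemma r1: assumes "EP_r m st pl" shows "strong_right m st pl"
  unfolding strong_right_def projections_def
proof (intro allI ballI impI)
  fix a b y assume y: "y \<in> range st" and h: "rdef m pl y (sclass m st pl a) \<and> rdef m pl y (sclass m st pl (m a b))"
  obtain c where c: "sigma m st pl a c" "y = m y (pl c)" "ract m st pl y (sclass m st pl a) = st (m y c)"
    using ract_eq[OF y] h by blast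
  obtain d where d: "sigma m st pl (m a b) d" "y = m y (pl d)"
    using h unfolding rdef_def sclass_def proj_le_def by blast
  have "sigma m st pl d (m c b)" using d(1) sig_r[OF c(1)] sig_sym sig_trans by blast
  then obtain v where v: "m (pl c) d = m c v" "sigma m st pl b v" using assms unfolding EP_r_def by blast
  define z where "z = m y c"
  have "m z v = m y d" unfolding z_def by (metis assoc c(2) v(1))
  then have "pl (m z v) = y" using pl_yc[OF y d(2)] by simp
  then have "m z (pl v) = z" using b4 by (metis assoc P_idem y z_def)
  then have "st (m z (pl v)) = st z" by simp
  then have "m (st z) (pl v) = st z" by (metis a3 c1)
  then have "proj_le m (ract m st pl y (sclass m st pl a)) (pl v)" unfolding proj_le_def using c(3) z_def by simp
  moreover have "v \<in> sclass m st pl b" unfolding sclass_def using v(2) by simp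
  ultimately show "rdef m pl (ract m st pl y (sclass m st pl a)) (sclass m st pl b)"
    unfolding rdef_def by (rule bexI)
qed

lemma r2: assumes "strong_right m st pl" shows "EP_r m st pl"
  unfolding EP_r_def
proof (intro allI impI)
  fix s t u assume stu: "sigma m st pl s (m t u)"
  define y where "y = pl (m (pl t) s)"
  have y: "y \<in> range st" unfolding y_def by (rule pl_P)
  have yv: "y = m (pl t) (pl s)" unfolding y_def by (rule b3)
  have yt: "y = m y (pl t)" unfolding yv by (metis assoc P_comm P_idem pl_P)
  have ys: "y = m y (pl s)" unfolding yv by (metis assoc P_idem pl_P)
  have d1: "rdef m pl y (sclass m st pl t)" unfolding rdef_def sclass_def proj_le_def
    using yt sig_refl by blast
  have d2: "rdef m pl y (sclass m st pl (m t u))" unfolding rdef_def sclass_def proj_le_def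
    using ys sig_sym[OF stu] by blast
  have "rdef m pl (ract m st pl y (sclass m st pl t)) (sclass m st pl u)"
    using assms d1 d2 y unfolding strong_right_def projections_def by blast
  moreover obtain c where c: "sigma m st pl t c" "y = m y (pl c)" "ract m st pl y (sclass m st pl t) = st (m y c)"
    using ract_eq[OF y d1] by blast
  moreover have "m y c = m y t" using ract_wd[OF y _ c(2) yt] c(1) sig_sym by blast
  ultimately obtain w where w: "sigma m st pl u w" "st (m y t) = m (st (m y t)) (pl w)"
    unfolding rdef_def sclass_def proj_le_def by auto
  define x where "x = st (m y t)"
  define v where "v = m x w"
  have "sigma m st pl u v" unfolding v_def x_def using w(1) sig_lP[OF st_P] sig_sym sig_trans by blast
  moreover have tv: "m t v = m y (m t w)"
    unfolding v_def x_def by (metis a4 assoc P_st y)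
  have "m (m y t) (pl w) = m y t" using w(2) a1 by (metis assoc x_def)
  then have "m (m y t) (pl w) = m (pl (m (m y t) w)) (m y t)" by (metis b4)
  then have "pl (m y t) = m (pl (m (m y t) w)) (pl (m y t))" 
    by (metis \<open>m (m y t) (pl w) = m y t\<close> b3)
  then have e1: "y = m (pl (m y (m t w))) y" using pl_yc[OF y yt] by (simp add: assoc)
  have e2: "pl (m y (m t w)) = m y (pl (m t w))" by (metis P_pl b3 y)
  have "pl (m y (m t w)) = y" using e1 e2 by (metis assoc P_comm P_idem pl_P y)
  then have "pl (m y (m t w)) = pl (m (pl t) s)" unfolding y_def by simp
  moreover have "sigma m st pl (m y (m t w)) (m (pl t) s)"
  proof -
    have "sigma m st pl (m y (m t w)) (m t w)" by (rule sig_lP[OF y])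
    moreover have "sigma m st pl (m t w) (m t u)" using sig_l[OF sig_sym[OF w(1)]] .
    moreover have "sigma m st pl (m t u) s" using sig_sym[OF stu] .
    moreover have "sigma m st pl s (m (pl t) s)" using sig_sym[OF sig_lP[OF pl_P]] .
    ultimately show ?thesis using sig_trans by blast
  qed
  ultimately have "m (pl t) s = m t v" using pr2 tv sig_sym by metis
  then show "\<exists>v. m (pl t) s = m t v \<and> sigma m st pl u v" using \<open>sigma m st pl u v\<close> by blast
qed

lemma l1: assumes "EP_l m st pl" shows "strong_left m st pl"
  unfolding strong_left_def projections_def
proof (intro allI ballI impI)
  fix a b y assume y: "y \<in> range st" and h: "ldef m st (sclass m st pl b) y \<and> ldef m st (sclass m st pl (m a b)) y"
  obtain c where c: "sigma m st pl b c" "y = m y (st c)" "lact m st pl (sclass m st pl b) y = pl (m c y)"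
    using lact_eq[OF y] h by blast
  obtain d where d: "sigma m st pl (m a b) d" "y = m y (st d)"
    using h unfolding ldef_def sclass_def proj_le_def by blast
  have "sigma m st pl d (m a c)" using d(1) sig_l[OF c(1)] sig_sym sig_trans by blast
  then obtain v where v: "m d (st c) = m v c" "sigma m st pl a v" using assms unfolding EP_l_def by blast
  define z where "z = m c y"
  have cy: "m (st c) y = y" using c(2) P_comm[OF st_P y] by metis
  have "m v z = m d y" unfolding z_def by (metis assoc cy v(1))
  then have "st (m v z) = y" using st_cy[OF y d(2)] by simp
  then have "m (st v) z = z" using a4 by (metis assoc P_idem y z_def)
  then have "pl (m (st v) z) = pl z" by simp
  then have "m (st v) (pl z) = pl z" by (metis b3 c2)
  then have "pl z = m (pl z) (st v)" by (metis P_comm pl_P st_P)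
  then have "proj_le m (lact m st pl (sclass m st pl b) y) (st v)" unfolding proj_le_def using c(3) z_def by simp
  moreover have "v \<in> sclass m st pl a" unfolding sclass_def using v(2) by simp
  ultimately show "ldef m st (sclass m st pl a) (lact m st pl (sclass m st pl b) y)"
    unfolding ldef_def by (rule bexI)
qed

lemma l2: assumes "strong_left m st pl" shows "EP_l m st pl"
  unfolding EP_l_def
proof (intro allI impI)
  fix s t u assume stu: "sigma m st pl s (m u t)"
  define y where "y = st (m s (st t))"
  have y: "y \<in> range st" unfolding y_def by simp
  have yv: "y = m (st s) (st t)" unfolding y_def by (rule a3)
  have yt: "y = m y (st t)" unfolding yv by (metis assoc P_idem st_P)
  have ys: "y = m y (st s)" unfolding yv by (metis assoc P_comm P_idem st_P)
  have d1: "ldef m st (sclass m st pl t) y" unfolding ldef_def sclass_def proj_le_def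
    using yt sig_refl by blast
  have d2: "ldef m st (sclass m st pl (m u t)) y" unfolding ldef_def sclass_def proj_le_def
    using ys sig_sym[OF stu] by blast
  have "ldef m st (sclass m st pl u) (lact m st pl (sclass m st pl t) y)"
    using assms d1 d2 y unfolding strong_left_def projections_def by blast
  moreover obtain c where c: "sigma m st pl t c" "y = m y (st c)" "lact m st pl (sclass m st pl t) y = pl (m c y)"
    using lact_eq[OF y d1] by blast
  moreover have "m c y = m t y" using lact_wd[OF y _ c(2) yt] c(1) sig_sym by blast
  ultimately obtain w where w: "sigma m st pl u w" "pl (m t y) = m (pl (m t y)) (st w)"
    unfolding ldef_def sclass_def proj_le_def by auto
  define x where "x = pl (m t y)"
  define v where "v = m w x"
  have "sigma m st pl u v" unfolding v_def x_def using w(1) sig_rP[OF pl_P] sig_sym sig_trans by blast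
  moreover have tv: "m v t = m w (m t y)"
    unfolding v_def x_def by (metis b4 assoc P_pl y)
  have xw: "m (st w) x = x" using w(2) P_comm[OF st_P pl_P] x_def by metis
  have "m (st w) (m t y) = m t y" using xw b1 by (metis assoc x_def)
  then have "m t y = m (m t y) (st (m w (m t y)))" by (metis a4)
  then have "st (m t y) = m (st (m t y)) (st (m w (m t y)))" by (metis a3)
  then have e1: "y = m y (st (m w (m t y)))" using st_cy[OF y yt] by simp
  have e2: "st (m w (m t y)) = m (st (m w t)) y" by (metis P_st a3 assoc y)
  have "st (m w (m t y)) = y" using e1 e2 by (metis assoc P_comm P_idem st_P y)
  then have "st (m w (m t y)) = st (m s (st t))" unfolding y_def by simp
  moreover have "sigma m st pl (m w (m t y)) (m s (st t))"
  proof -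
    have "sigma m st pl (m (m w t) y) (m w t)" by (rule sig_rP[OF y])
    then have "sigma m st pl (m w (m t y)) (m w t)" by (simp add: assoc)
    moreover have "sigma m st pl (m w t) (m u t)" using sig_r[OF sig_sym[OF w(1)]] .
    moreover have "sigma m st pl (m u t) s" using sig_sym[OF stu] .
    moreover have "sigma m st pl s (m s (st t))" using sig_sym[OF sig_rP[OF st_P]] .
    ultimately show ?thesis using sig_trans by blast
  qed
  ultimately have "m s (st t) = m v t" using pr1 tv sig_sym by metis
  then show "\<exists>v. m s (st t) = m v t \<and> sigma m st pl u v" using \<open>sigma m st pl u v\<close> by blast
qed
end

theorem proposition3p7:
  fixes m :: "'a \<Rightarrow> 'a \<Rightarrow> 'a" and st pl :: "'a \<Rightarrow> 'a"
  assumes "restriction_semigroup m st pl" and "proper m st pl"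
  shows "(EP_r m st pl \<longleftrightarrow> strong_right m st pl) \<and>
         (EP_l m st pl \<longleftrightarrow> strong_left m st pl)"
proof -
  interpret prs m st pl using assms by (unfold_locales) auto
  show ?thesis using r1 r2 l1 l2 by blast
qed

end
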